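(* Let $g\ge 2$ and let $\Lambda_1,\dots,\Lambda_g$ be lattices in $\mathbb{C}$ such that $\Lambda_1+\cdots+\Lambda_g$ is not discrete. Then there is $2\le j\le g$ such that $\Lambda_1+\Lambda_j$ is not discrete. Moreover, if $\Lambda_1+\cdots+\Lambda_g$ is dense in $\mathbb{C}$, then for such a $j$ there is $2\le k\le g$ such that $\Lambda_1+\Lambda_j+\Lambda_k$ is dense in $\mathbb{C}$.
   Context: A lattice in $\mathbb{C}$ is a discrete subgroup $\mathbb{Z}a+\mathbb{Z}b$ with $a,b$ linearly independent over $\mathbb{R}$. *)

theory Defs
  imports "HOL-Analysis.Analysis" "HOL-Library.Set_Algebras"
begin

text \<open>Sums of sets are Minkowski sums (set_plus from Set_Algebras); discreteness is the
  library notion discrete (every point isolated).\<close>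

definition is_lattice :: "complex set \<Rightarrow> bool" where
  "is_lattice L \<longleftrightarrow> (\<exists>a b. (\<forall>r s :: real. r *\<^sub>R a + s *\<^sub>R b = 0 \<longrightarrow> r = 0 \<and> s = 0) \<and>
      L = {of_int m * a + of_int n * b | m n :: int. True})"

end

theory Submission
  imports Defs
begin


definition subgrp :: "'a::ab_group_add set \<Rightarrow> bool" where
  "subgrp G \<longleftrightarrow> 0 \<in> G \<and> (\<forall>x\<in>G. \<forall>y\<in>G. x - y \<in> G)"

lemma subgrp_0: "subgrp G \<Longrightarrow> 0 \<in> G" by (simp add: subgrp_def)
lemma subgrp_diff: "subgrp G \<Longrightarrow> x \<in> G \<Longrightarrow> y \<in> G \<Longrightarrow> x - y \<in> G" by (simp add: subgrp_def)
lemma subgrp_uminus: "subgrp G \<Longrightarrow> x \<in> G \<Longrightarrow> - x \<in> G"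
  by (metis diff_0 subgrp_def)
lemma subgrp_add: "subgrp G \<Longrightarrow> x \<in> G \<Longrightarrow> y \<in> G \<Longrightarrow> x + y \<in> G"
  by (metis diff_minus_eq_add subgrp_diff subgrp_uminus)

lemma subgrp_nat_mult: "subgrp G \<Longrightarrow> x \<in> G \<Longrightarrow> of_nat n * (x::'a::ring_1) \<in> G"
  by (induction n) (auto simp: subgrp_0 subgrp_add algebra_simps)

lemma subgrp_int_mult: "subgrp G \<Longrightarrow> x \<in> G \<Longrightarrow> of_int m * (x::'a::ring_1) \<in> G"
proof (cases "m \<ge> 0")
  case True
  assume "subgrp G" "x \<in> G"
  then show ?thesis using True subgrp_nat_mult[of G x "nat m"] by simp
next
  case False
  assume a: "subgrp G" "x \<in> G"
  have "of_int m * x = - (of_nat (nat (-m)) * x)" using False by simp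
  then show ?thesis using a subgrp_nat_mult subgrp_uminus by metis
qed

lemma subgrp_plus: "subgrp A \<Longrightarrow> subgrp B \<Longrightarrow> subgrp (A + B)"
  unfolding subgrp_def set_plus_def
  apply auto
  apply (metis add_0)
  by (metis add_diff_add)

lemma subset_plus: "0 \<in> B \<Longrightarrow> A \<subseteq> A + (B::'a::comm_monoid_add set)"
  unfolding set_plus_def by force

lemma sum_set_induct:
  assumes "finite I" "Q 0" "\<And>x y. Q x \<Longrightarrow> Q y \<Longrightarrow> Q (x+y)" "\<And>i x. i \<in> I \<Longrightarrow> x \<in> A i \<Longrightarrow> Q x"
  shows "\<forall>x \<in> sum A I. Q (x::'a::comm_monoid_add)"
  using assms(1,4)
proof (induction I rule: finite_induct)
  case empty
  then show ?case using assms(2) by simp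
next
  case (insert i I)
  show ?case
  proof
    fix x assume "x \<in> sum A (insert i I)"
    then have "x \<in> A i + sum A I" using insert by simp
    then obtain u v where "u \<in> A i" "v \<in> sum A I" "x = u + v" by (auto simp: set_plus_def)
    have "Q u" using insert.prems \<open>u \<in> A i\<close> by auto
    moreover have "Q v" using insert.IH insert.prems \<open>v \<in> sum A I\<close> by auto
    ultimately show "Q x" using assms(3) \<open>x = u + v\<close> by simp
  qed
qed

lemma lattice_subgrp: "is_lattice L \<Longrightarrow> subgrp L"
proof -
  assume "is_lattice L"
  then obtain a b where L: "L = {of_int m * a + of_int n * b | m n :: int. True}"
    unfolding is_lattice_def by blast
  have "0 \<in> L" unfolding L by (rule CollectI, rule exI[of _ 0], rule exI[of _ 0]) simp
  moreover have "x - y \<in> L" if "x \<in> L" "y \<in> L" for x y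
  proof -
    obtain m n where "x = of_int m * a + of_int n * b" using \<open>x \<in> L\<close> L by blast
    moreover obtain m' n' where "y = of_int m' * a + of_int n' * b" using \<open>y \<in> L\<close> L by blast
    ultimately have "x - y = of_int (m - m') * a + of_int (n - n') * b" by (simp add: algebra_simps)
    then show ?thesis unfolding L by blast
  qed
  ultimately show ?thesis unfolding subgrp_def by blast
qed

lemma discrete_subgrp_iff:
  fixes G :: "'a::real_normed_vector set"
  assumes "subgrp G"
  shows "discrete G \<longleftrightarrow> (\<exists>e>0. \<forall>x\<in>G. x \<noteq> 0 \<longrightarrow> e \<le> norm x)"
proof
  assume "discrete G"
  then have "0 isolated_in G" using assms subgrp_0 discreteD by blast
  then obtain e where e: "e > 0" "\<And>y. y \<in> G \<Longrightarrow> dist 0 y < e \<Longrightarrow> y = 0" by (metis isolated_inE_dist)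
  show "\<exists>e>0. \<forall>x\<in>G. x \<noteq> 0 \<longrightarrow> e \<le> norm x"
    using e by (metis dist_0_norm not_le)
next
  assume "\<exists>e>0. \<forall>x\<in>G. x \<noteq> 0 \<longrightarrow> e \<le> norm x"
  then obtain e where e: "e > 0" "\<forall>x\<in>G. x \<noteq> 0 \<longrightarrow> e \<le> norm x" by blast
  show "discrete G"
  proof (rule discreteI)
    fix x assume "x \<in> G"
    show "x isolated_in G" unfolding isolated_in_dist_Ex_iff
    proof (intro conjI exI[of _ e] ballI impI)
      fix y assume "y \<in> G" "dist x y < e"
      then have "y - x \<in> G" using assms \<open>x\<in>G\<close> subgrp_diff by blast
      then show "y = x" using e \<open>dist x y < e\<close> by (metis dist_norm norm_minus_commute not_le right_minus_eq)
    qed (use \<open>x\<in>G\<close> e in auto)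
  qed
qed

lemma pigeon:
  fixes G L :: "'a::{real_normed_field,heine_borel} set"
  assumes G: "subgrp G" and L: "subgrp L" "L \<subseteq> G" and e: "e > 0" "\<forall>x\<in>G. x \<noteq> 0 \<longrightarrow> e \<le> norm x"
    and red: "\<forall>z\<in>G. \<exists>l\<in>L. norm (z - l) \<le> R" and u: "u \<in> G"
  shows "\<exists>n::nat. n > 0 \<and> of_nat n * u \<in> L"
proof -
  have "\<forall>n. \<exists>l\<in>L. norm (of_nat n * u - l) \<le> R"
    using red subgrp_nat_mult[OF G u] by blast
  then obtain l where l: "\<And>n. l n \<in> L" "\<And>n. norm (of_nat n * u - l n) \<le> R" by metis
  define f where "f n = of_nat n * u - l n" for n
  define F where "F = G \<inter> cball 0 R"
  have "uniform_discrete F"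
  proof (rule uniformI2[OF e(1)])
    fix x y assume "x \<in> F" "y \<in> F" "x \<noteq> y"
    then have "x - y \<in> G" "x - y \<noteq> 0" using G subgrp_diff unfolding F_def by auto
    then show "e \<le> dist x y" using e(2) by (simp add: dist_norm)
  qed
  moreover have "bounded F" unfolding F_def by (meson bounded_Int bounded_cball)
  ultimately have fin: "finite F" using uniform_discrete_finite_iff by blast
  have "f n \<in> F" for n
    unfolding F_def f_def using l G L u subgrp_nat_mult subgrp_diff by (auto simp: dist_norm norm_minus_commute) blast
  then have "range f \<subseteq> F" by auto
  then have "finite (range f)" using fin finite_subset by auto
  then have "\<not> inj f" using finite_imageD by auto
  then obtain n1 n2 where n: "n1 \<noteq> n2" "f n1 = f n2" unfolding inj_def by blast
  have key: "of_nat (j - i) * u \<in> L" if "f i = f j" "i < j" for i j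
  proof -
    have "of_nat (j - i) * u = l j - l i" using that unfolding f_def
      by (simp add: of_nat_diff algebra_simps)
    then show ?thesis using l L subgrp_diff by metis
  qed
  show ?thesis
  proof (cases "n1 < n2")
    case True then show ?thesis using key[of n1 n2] n by (intro exI[of _ "n2 - n1"]) auto
  next
    case False then have "n2 < n1" using n by auto
    then show ?thesis using key[of n2 n1] n by (intro exI[of _ "n1 - n2"]) auto
  qed
qed



lemma indep_D:
  assumes indep: "\<forall>r s::real. r *\<^sub>R a + s *\<^sub>R b = 0 \<longrightarrow> r = 0 \<and> s = 0"
  shows "Im (cnj a * b) \<noteq> 0"
proof
  assume D: "Im (cnj a * b) = 0"
  have a0: "a \<noteq> 0" using indep[rule_format, of 1 0] by auto
  define t where "t = Re (cnj a * b)"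
  have "cnj a * b = of_real t" using D by (simp add: complex_eq_iff t_def)
  then have "a * cnj a * b = of_real t * a" by (simp add: algebra_simps)
  then have "of_real ((Re a)\<^sup>2 + (Im a)\<^sup>2) * b = of_real t * a" by (simp add: complex_mult_cnj)
  moreover have "t *\<^sub>R a + (- ((Re a)\<^sup>2 + (Im a)\<^sup>2)) *\<^sub>R b = of_real t * a - of_real ((Re a)\<^sup>2 + (Im a)\<^sup>2) * b"
    by (simp add: scaleR_conv_of_real algebra_simps)
  ultimately have "t *\<^sub>R a + (- ((Re a)\<^sup>2 + (Im a)\<^sup>2)) *\<^sub>R b = 0" by simp
  then have "(Re a)\<^sup>2 + (Im a)\<^sup>2 = 0" using indep by (metis neg_equal_0_iff_equal)
  then show False using a0 by (simp add: complex_eq_iff add_nonneg_eq_0_iff)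
qed

lemma span_ab:
  assumes D: "Im (cnj a * b) \<noteq> 0"
  shows "\<exists>x y::real. z = of_real x * a + of_real y * b"
proof -
  define d where "d = Re a * Im b - Im a * Re b"
  have d: "d \<noteq> 0" using D by (simp add: d_def)
  define x where "x = (Im b * Re z - Re b * Im z) / d"
  define y where "y = (Re a * Im z - Im a * Re z) / d"
  have e1: "x * Re a + y * Re b = Re z"
    using d by (simp add: x_def y_def divide_simps) (simp add: d_def algebra_simps)
  have e2: "x * Im a + y * Im b = Im z"
    using d by (simp add: x_def y_def divide_simps) (simp add: d_def algebra_simps)
  have "z = of_real x * a + of_real y * b"
    using e1 e2 by (simp add: complex_eq_iff)
  then show ?thesis by blast
qed

lemma lattice_unif:
  assumes D: "Im (cnj a * b) \<noteq> 0"
  shows "\<exists>e>0. \<forall>x\<in>{of_int m * a + of_int n * b | m n :: int. True}. x \<noteq> 0 \<longrightarrow> e \<le> norm x"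
proof -
  have a0: "a \<noteq> 0" using D by auto
  define e where "e = min (norm a) (\<bar>Im (cnj a * b)\<bar> / norm a)"
  have "e > 0" using a0 D by (simp add: e_def)
  moreover have "e \<le> norm x" if xL: "x \<in> {of_int m * a + of_int n * b | m n :: int. True}" and x0: "x \<noteq> 0" for x
  proof -
    obtain m n :: int where x: "x = of_int m * a + of_int n * b" using xL by blast
    show ?thesis
    proof (cases "n = 0")
      case True
      then have "m \<noteq> 0" using x x0 by auto
      have n: "norm x = \<bar>real_of_int m\<bar> * norm a" using True x by (simp add: norm_mult)
      have "1 \<le> \<bar>real_of_int m\<bar>" using \<open>m \<noteq> 0\<close> by linarith
      then have "norm a \<le> norm x" unfolding n by (simp add: mult_le_cancel_right1)
      then show ?thesis unfolding e_def by linarith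
    next
      case False
      have "Im (cnj a * x) = of_int n * Im (cnj a * b)" unfolding x by (simp add: algebra_simps)
      then have "\<bar>of_int n * Im (cnj a * b)\<bar> \<le> norm a * norm x"
        by (metis abs_Im_le_cmod complex_mod_cnj norm_mult)
      moreover have "1 \<le> \<bar>real_of_int n\<bar>" using False by linarith
      then have "\<bar>Im (cnj a * b)\<bar> \<le> \<bar>of_int n * Im (cnj a * b)\<bar>"
        by (simp add: abs_mult mult_le_cancel_right1)
      ultimately have "\<bar>Im (cnj a * b)\<bar> / norm a \<le> norm x" using a0
        by (simp add: divide_le_eq mult.commute)
      then show ?thesis unfolding e_def by linarith
    qed
  qed
  ultimately show ?thesis by blast
qed

lemma lattice_red:
  assumes D: "Im (cnj a * b) \<noteq> 0"
  shows "\<exists>l\<in>{of_int m * a + of_int n * b | m n :: int. True}. norm (z - l) \<le> norm a + norm b"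
proof -
  obtain x y :: real where z: "z = of_real x * a + of_real y * b" using span_ab[OF D] by blast
  define l where "l = of_int \<lfloor>x\<rfloor> * a + of_int \<lfloor>y\<rfloor> * b"
  have "z - l = of_real (frac x) * a + of_real (frac y) * b"
    unfolding z l_def frac_def by (simp add: algebra_simps)
  also have "norm \<dots> \<le> frac x * norm a + frac y * norm b"
    by (metis (no_types, lifting) frac_ge_0 norm_mult norm_of_real norm_triangle_le abs_of_nonneg order_refl add_mono)
  also have "\<dots> \<le> norm a + norm b"
    by (intro add_mono mult_left_le_one_le) (auto simp: frac_lt_1 less_imp_le)
  finally show ?thesis unfolding l_def by blast
qed



lemma subgrp_sum: "finite I \<Longrightarrow> (\<And>i. i \<in> I \<Longrightarrow> subgrp (A i)) \<Longrightarrow> subgrp (sum A I)"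
proof (induction I rule: finite_induct)
  case empty then show ?case by (simp add: subgrp_def)
next
  case (insert i I) then show ?case by (simp add: subgrp_plus)
qed

lemma lattice_mult:
  fixes L1 :: "complex set"
  assumes "subgrp L1" "of_nat n1 * a \<in> L1" "of_nat n2 * b \<in> L1"
  shows "\<forall>x\<in>{of_int m * a + of_int n * b | m n :: int. True}. of_nat (n1 * n2) * x \<in> L1"
proof
  fix x assume "x \<in> {of_int m * a + of_int n * b | m n :: int. True}"
  then obtain m n :: int where x: "x = of_int m * a + of_int n * b" by blast
  have "of_nat (n1 * n2) * x = of_int (m * int n2) * (of_nat n1 * a) + of_int (n * int n1) * (of_nat n2 * b)"
    unfolding x by (simp add: algebra_simps)
  then show "of_nat (n1 * n2) * x \<in> L1"
    using assms by (metis subgrp_add subgrp_int_mult)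
qed

lemma common_mult:
  fixes L1 :: "complex set"
  assumes "finite I" "subgrp L1" "\<forall>k\<in>I. \<exists>n::nat. n > 0 \<and> (\<forall>x\<in>A k. of_nat n * x \<in> L1)"
  shows "\<exists>N::nat. N > 0 \<and> (\<forall>x\<in>sum A I. of_nat N * x \<in> L1)"
proof -
  obtain n where n: "\<And>k. k \<in> I \<Longrightarrow> n k > 0 \<and> (\<forall>x\<in>A k. of_nat (n k) * x \<in> L1)"
    using assms(3) by metis
  define N where "N = prod n I"
  have N0: "N > 0" unfolding N_def using n by (simp add: assms(1) prod_pos)
  have "\<forall>x\<in>sum A I. of_nat N * x \<in> L1"
  proof (rule sum_set_induct[OF assms(1)])
    show "of_nat N * 0 \<in> L1" using assms(2) subgrp_0 by simp
    show "of_nat N * (x + y) \<in> L1" if "of_nat N * x \<in> L1" "of_nat N * y \<in> L1" for x y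
      using that assms(2) subgrp_add by (simp add: distrib_left)
    show "of_nat N * x \<in> L1" if "k \<in> I" "x \<in> A k" for k x
    proof -
      have "n k dvd N" unfolding N_def using that assms(1) by (simp add: dvd_prodI)
      then obtain q where "N = n k * q" by blast
      then have "of_nat N * x = of_nat q * (of_nat (n k) * x)" by simp
      then show ?thesis using n that assms(2) subgrp_nat_mult by metis
    qed
  qed
  then show ?thesis using N0 by blast
qed

lemma part1:
  fixes g :: nat and \<Lambda> :: "nat \<Rightarrow> complex set"
  assumes "g \<ge> 1"
    and lat: "\<And>i. i \<in> {1..g} \<Longrightarrow> is_lattice (\<Lambda> i)"
    and disc: "\<forall>j\<in>{2..g}. discrete (\<Lambda> 1 + \<Lambda> j)"
  shows "discrete (\<Sum>i\<in>{1..g}. \<Lambda> i)"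
proof -
  have "is_lattice (\<Lambda> 1)" using lat assms(1) by auto
  then obtain a b where indep: "\<forall>r s :: real. r *\<^sub>R a + s *\<^sub>R b = 0 \<longrightarrow> r = 0 \<and> s = 0"
    and L1: "\<Lambda> 1 = {of_int m * a + of_int n * b | m n :: int. True}" unfolding is_lattice_def by blast
  have D: "Im (cnj a * b) \<noteq> 0" using indep_D[OF indep] .
  have sL1: "subgrp (\<Lambda> 1)" using lat assms(1) lattice_subgrp by auto
  have "\<forall>k\<in>{1..g}. \<exists>n::nat. n > 0 \<and> (\<forall>x\<in>\<Lambda> k. of_nat n * x \<in> \<Lambda> 1)"
  proof
    fix k assume k: "k \<in> {1..g}"
    show "\<exists>n::nat. n > 0 \<and> (\<forall>x\<in>\<Lambda> k. of_nat n * x \<in> \<Lambda> 1)"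
    proof (cases "k = 1")
      case True then show ?thesis by (intro exI[of _ 1]) auto
    next
      case False
      then have k2: "k \<in> {2..g}" using k by auto
      have sLk: "subgrp (\<Lambda> k)" using lat k lattice_subgrp by auto
      obtain ak bk where Lk: "\<Lambda> k = {of_int m * ak + of_int n * bk | m n :: int. True}"
        using lat[OF k] unfolding is_lattice_def by blast
      define G where "G = \<Lambda> 1 + \<Lambda> k"
      have sG: "subgrp G" unfolding G_def using sL1 sLk subgrp_plus by blast
      have L1G: "\<Lambda> 1 \<subseteq> G" unfolding G_def using subset_plus sLk subgrp_0 by blast
      have LkG: "\<Lambda> k \<subseteq> G" unfolding G_def using subset_plus sL1 subgrp_0 by (metis add.commute)
      obtain e where e: "e > 0" "\<forall>x\<in>G. x \<noteq> 0 \<longrightarrow> e \<le> norm x"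
        using disc k2 discrete_subgrp_iff[OF sG] unfolding G_def by blast
      have red: "\<forall>z\<in>G. \<exists>l\<in>\<Lambda> 1. norm (z - l) \<le> norm a + norm b"
        using lattice_red[OF D] L1 by blast
      have akL: "ak \<in> \<Lambda> k" unfolding Lk by (rule CollectI, rule exI[of _ 1], rule exI[of _ 0]) simp
      have bkL: "bk \<in> \<Lambda> k" unfolding Lk by (rule CollectI, rule exI[of _ 0], rule exI[of _ 1]) simp
      obtain n1 where n1: "n1 > 0" "of_nat n1 * ak \<in> \<Lambda> 1"
        using pigeon[OF sG sL1 L1G e red] akL LkG by blast
      obtain n2 where n2: "n2 > 0" "of_nat n2 * bk \<in> \<Lambda> 1"
        using pigeon[OF sG sL1 L1G e red] bkL LkG by blast
      show ?thesis using lattice_mult[OF sL1 n1(2) n2(2)] n1 n2 unfolding Lk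
        by (intro exI[of _ "n1 * n2"]) auto
    qed
  qed
  then obtain N :: nat where N: "N > 0" "\<forall>x\<in>(\<Sum>i\<in>{1..g}. \<Lambda> i). of_nat N * x \<in> \<Lambda> 1"
    using common_mult[OF _ sL1] by (metis finite_atLeastAtMost)
  have sS: "subgrp (\<Sum>i\<in>{1..g}. \<Lambda> i)" using subgrp_sum lat lattice_subgrp by (metis finite_atLeastAtMost)
  obtain e where e: "e > 0" "\<forall>x\<in>\<Lambda> 1. x \<noteq> 0 \<longrightarrow> e \<le> norm x" using lattice_unif[OF D] L1 by blast
  show ?thesis unfolding discrete_subgrp_iff[OF sS]
  proof (intro exI[of _ "e / N"] conjI ballI impI)
    show "e / N > 0" using e N by simp
    fix x assume "x \<in> (\<Sum>i\<in>{1..g}. \<Lambda> i)" "x \<noteq> 0"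
    then have "of_nat N * x \<in> \<Lambda> 1" "of_nat N * x \<noteq> 0" using N by auto
    then have "e \<le> N * norm x" using e by (metis norm_mult norm_of_nat)
    then show "e / N \<le> norm x" using N by (simp add: divide_le_eq mult.commute)
  qed
qed



lemma line_in_closure:
  fixes G :: "complex set"
  assumes sG: "subgrp G" and nd: "\<not> discrete G"
  shows "\<exists>d. norm d = 1 \<and> (\<forall>t::real. of_real t * d \<in> closure G)"
proof -
  have "\<forall>n::nat. \<exists>x\<in>G. x \<noteq> 0 \<and> norm x < inverse (real (Suc n))"
  proof
    fix n :: nat
    have "\<not> (\<forall>x\<in>G. x \<noteq> 0 \<longrightarrow> inverse (real (Suc n)) \<le> norm x)"
      using nd discrete_subgrp_iff[OF sG] by (metis inverse_positive_iff_positive of_nat_0_less_iff zero_less_Suc)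
    then show "\<exists>x\<in>G. x \<noteq> 0 \<and> norm x < inverse (real (Suc n))" by (auto simp: not_le)
  qed
  then obtain h where h: "\<And>n. h n \<in> G" "\<And>n. h n \<noteq> 0" "\<And>n. norm (h n) < inverse (real (Suc n))"
    by metis
  have h0: "h \<longlonglongrightarrow> 0"
    by (rule Lim_null_comparison[OF always_eventually LIMSEQ_inverse_real_of_nat]) (intro allI less_imp_le h(3))
  have "\<forall>n. sgn (h n) \<in> sphere 0 1" using h(2) by (simp add: norm_sgn)
  then obtain d r where d: "d \<in> sphere 0 1" "strict_mono r" "((\<lambda>n. sgn (h n)) \<circ> r) \<longlonglongrightarrow> d"
    using seq_compactE[OF compact_imp_seq_compact[OF compact_sphere]] by metis
  define H where "H n = h (r n)" for n
  have H0: "H \<longlonglongrightarrow> 0" unfolding H_def using LIMSEQ_subseq_LIMSEQ[OF h0 d(2)] by (simp add: comp_def)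
  have Hd: "(\<lambda>n. sgn (H n)) \<longlonglongrightarrow> d" using d(3) by (simp add: H_def comp_def)
  have "of_real t * d \<in> closure G" for t :: real
  proof -
    define w where "w n = of_int \<lfloor>t / norm (H n)\<rfloor> * H n" for n
    have wG: "w n \<in> G" for n unfolding w_def H_def using h(1) sG subgrp_int_mult by blast
    have bound: "norm (w n - of_real t * d) \<le> norm (H n) + \<bar>t\<bar> * norm (sgn (H n) - d)" for n
    proof -
      define q where "q = t / norm (H n)"
      have Hn: "H n \<noteq> 0" using h(2) by (simp add: H_def)
      have sg: "sgn (H n) = of_real (inverse (norm (H n))) * H n" by (simp add: sgn_div_norm scaleR_conv_of_real)
      have eq: "of_real q * H n = of_real t * sgn (H n)"
        unfolding sg q_def divide_inverse of_real_mult by (simp only: mult.assoc)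
      have wq: "w n = of_int \<lfloor>q\<rfloor> * H n" unfolding w_def q_def by simp
      have "(of_int \<lfloor>q\<rfloor> - of_real q) * H n + of_real t * (sgn (H n) - d)
          = of_int \<lfloor>q\<rfloor> * H n - of_real q * H n + of_real t * sgn (H n) - of_real t * d"
        by (simp add: algebra_simps)
      then have e1: "w n - of_real t * d = (of_int \<lfloor>q\<rfloor> - of_real q) * H n + of_real t * (sgn (H n) - d)"
        unfolding eq wq by simp
      have n1: "norm (w n - of_real t * d) \<le> norm ((of_int \<lfloor>q\<rfloor> - of_real q) * H n) + norm (of_real t * (sgn (H n) - d))"
        unfolding e1 by (rule norm_triangle_ineq)
      have n2: "norm ((of_int \<lfloor>q\<rfloor> - of_real q) * H n) = \<bar>of_int \<lfloor>q\<rfloor> - q\<bar> * norm (H n)"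
      proof -
        have "(of_int \<lfloor>q\<rfloor> - of_real q :: complex) = of_real (of_int \<lfloor>q\<rfloor> - q)" by simp
        then show ?thesis by (simp only: norm_mult norm_of_real)
      qed
      have n3: "\<bar>of_int \<lfloor>q\<rfloor> - q\<bar> * norm (H n) \<le> 1 * norm (H n)"
        by (intro mult_right_mono norm_ge_zero) linarith
      have n4: "norm (of_real t * (sgn (H n) - d)) = \<bar>t\<bar> * norm (sgn (H n) - d)"
        by (simp add: norm_mult)
      show ?thesis using n1 n2 n3 n4 by linarith
    qed
    have "(\<lambda>n. norm (H n) + \<bar>t\<bar> * norm (sgn (H n) - d)) \<longlonglongrightarrow> 0 + \<bar>t\<bar> * 0"
    proof (intro tendsto_add tendsto_mult tendsto_const)
      show "(\<lambda>n. norm (H n)) \<longlonglongrightarrow> 0" using H0 by (simp add: tendsto_norm_zero)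
      show "(\<lambda>n. norm (sgn (H n) - d)) \<longlonglongrightarrow> 0" using Hd by (simp add: LIM_zero tendsto_norm_zero)
    qed
    then have "(\<lambda>n. norm (H n) + \<bar>t\<bar> * norm (sgn (H n) - d)) \<longlonglongrightarrow> 0" by simp
    then have "(\<lambda>n. w n - of_real t * d) \<longlonglongrightarrow> 0"
      by (rule Lim_null_comparison[rotated]) (use bound in \<open>simp add: always_eventually\<close>)
    then have "w \<longlonglongrightarrow> of_real t * d" by (simp add: LIM_zero_iff)
    then show ?thesis unfolding closure_sequential using wG by blast
  qed
  then show ?thesis using d(1) by auto
qed



definition prj :: "complex \<Rightarrow> complex \<Rightarrow> real" where "prj d z = Im (cnj d * z)"

lemma prj_add[simp]: "prj d (x + y) = prj d x + prj d y" by (simp add: prj_def algebra_simps)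
lemma prj_diff[simp]: "prj d (x - y) = prj d x - prj d y" by (simp add: prj_def algebra_simps)
lemma prj_int_mult[simp]: "prj d (of_int m * x) = of_int m * prj d x" by (simp add: prj_def algebra_simps)
lemma prj_nat_mult[simp]: "prj d (of_nat m * x) = of_nat m * prj d x" by (simp add: prj_def algebra_simps)
lemma prj_le: "\<bar>prj d x\<bar> \<le> norm d * norm x" unfolding prj_def
  by (metis abs_Im_le_cmod complex_mod_cnj norm_mult)

lemma dense_small:
  fixes G :: "complex set"
  assumes sG: "subgrp G" and small: "\<forall>e>0. \<exists>g\<in>G. prj d g \<noteq> 0 \<and> \<bar>prj d g\<bar> < e"
  shows "\<forall>r. \<forall>e>0. \<exists>g\<in>G. \<bar>prj d g - r\<bar> < e"
proof (intro allI impI)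
  fix r e :: real assume "e > 0"
  then obtain g where g: "g \<in> G" "prj d g \<noteq> 0" "\<bar>prj d g\<bar> < e" using small by blast
  define x where "x = prj d g"
  define m where "m = \<lfloor>r / x\<rfloor>"
  have "of_int m * g \<in> G" using sG g subgrp_int_mult by blast
  moreover have "\<bar>prj d (of_int m * g) - r\<bar> < e"
  proof -
    have "prj d (of_int m * g) - r = of_int m * x - r" by (simp add: x_def)
    also have "\<dots> = (of_int m - r / x) * x" using g(2) by (simp add: x_def field_simps)
    finally have "prj d (of_int m * g) - r = (of_int m - r / x) * x" .
    then have "\<bar>prj d (of_int m * g) - r\<bar> = \<bar>of_int m - r / x\<bar> * \<bar>x\<bar>" by (simp add: abs_mult)
    also have "\<dots> \<le> 1 * \<bar>x\<bar>" unfolding m_def by (intro mult_right_mono abs_ge_zero) linarith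
    finally show ?thesis using g(3) x_def by simp
  qed
  ultimately show "\<exists>g\<in>G. \<bar>prj d g - r\<bar> < e" by blast
qed

lemma dense_from_line:
  fixes G :: "complex set"
  assumes sG: "subgrp G" and d: "norm d = 1" and line: "\<forall>t::real. of_real t * d \<in> closure G"
    and dense: "\<forall>r. \<forall>e>0. \<exists>g\<in>G. \<bar>prj d g - r\<bar> < e"
  shows "closure G = UNIV"
proof -
  have "z \<in> closure G" for z
    unfolding closure_approachable
  proof (intro allI impI)
    fix e :: real assume e: "e > 0"
    obtain g where g: "g \<in> G" "\<bar>prj d g - prj d z\<bar> < e / 2" using dense e by (meson half_gt_zero)
    define w where "w = cnj d * (z - g)"
    define s where "s = Re w"
    obtain g' where g': "g' \<in> G" "dist g' (of_real s * d) < e / 2"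
      using line e unfolding closure_approachable by (meson half_gt_zero)
    have dd: "d * cnj d = 1" using d complex_norm_square[of d] by simp
    have zg: "z - g = d * w" unfolding w_def by (simp add: mult.assoc[symmetric] dd)
    have ws: "w - of_real s = \<i> * of_real (Im w)" by (simp add: s_def complex_eq_iff)
    have "z - g - of_real s * d = d * (w - of_real s)" unfolding zg by (simp add: algebra_simps)
    also have "\<dots> = d * (\<i> * of_real (Im w))" unfolding ws ..
    finally have "norm (z - g - of_real s * d) = \<bar>Im w\<bar>" using d by (simp add: norm_mult)
    also have "Im w = prj d z - prj d g" unfolding w_def prj_def by (simp add: algebra_simps)
    finally have n1: "norm (z - g - of_real s * d) < e / 2" using g(2) by (simp add: abs_minus_commute)
    have gg: "g + g' - z = (g' - of_real s * d) - (z - g - of_real s * d)" by (simp add: algebra_simps)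
    have "dist (g + g') z \<le> norm (g' - of_real s * d) + norm (z - g - of_real s * d)"
      unfolding dist_norm gg by (rule norm_triangle_ineq4)
    also have "\<dots> < e" using g'(2) n1 by (simp add: dist_norm)
    finally show "\<exists>y\<in>G. dist y z < e" using g g' sG subgrp_add by blast
  qed
  then show ?thesis by auto
qed



lemma subgrp_image: "subgrp G \<Longrightarrow> (\<And>x y. f (x - y) = f x - f y) \<Longrightarrow> subgrp (f ` G)"
proof -
  assume sG: "subgrp G" and f: "\<And>x y. f (x - y) = f x - f y"
  have "f 0 = 0" using f[of 0 0] by simp
  then have "0 \<in> f ` G" using sG subgrp_0 by (metis image_eqI)
  moreover have "u - v \<in> f ` G" if uv: "u \<in> f ` G" "v \<in> f ` G" for u v
  proof -
    obtain x y where "x \<in> G" "y \<in> G" "u = f x" "v = f y" using uv by blast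
    then show ?thesis using f[of x y] sG subgrp_diff by (metis image_eqI)
  qed
  ultimately show ?thesis unfolding subgrp_def by blast
qed

lemma subgrp_multiples: "subgrp {z :: complex. \<exists>m::int. prj d z = of_int m * p}"
  unfolding subgrp_def
proof (intro conjI ballI)
  show "0 \<in> {z. \<exists>m::int. prj d z = of_int m * p}" by (auto intro: exI[of _ 0] simp: prj_def)
  fix x y assume "x \<in> {z. \<exists>m::int. prj d z = of_int m * p}" "y \<in> {z. \<exists>m::int. prj d z = of_int m * p}"
  then obtain m m' :: int where "prj d x = of_int m * p" "prj d y = of_int m' * p" by blast
  then have "prj d (x - y) = of_int (m - m') * p" by (simp add: algebra_simps)
  then show "x - y \<in> {z. \<exists>m::int. prj d z = of_int m * p}" by blast
qed

lemma prj_pigeon: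
  fixes G :: "complex set"
  assumes sG: "subgrp G" and c: "c \<in> G" "prj d c \<noteq> 0" and e: "e > 0" "\<forall>g\<in>G. prj d g \<noteq> 0 \<longrightarrow> e \<le> \<bar>prj d g\<bar>"
    and u: "u \<in> G"
  shows "\<exists>n::nat. n > 0 \<and> of_nat n * u \<in> {z. \<exists>m::int. prj d z = of_int m * prj d c}"
proof -
  define p where "p = prj d c"
  define G' where "G' = prj d ` G"
  define L' where "L' = {of_int m * p | m :: int. True}"
  have sG': "subgrp G'" unfolding G'_def by (rule subgrp_image[OF sG]) simp
  have sL': "subgrp L'" unfolding subgrp_def L'_def
  proof (intro conjI ballI)
    show "(0::real) \<in> {of_int m * p | m :: int. True}" by (auto intro: exI[of _ 0])
    fix x y assume "x \<in> {of_int m * p | m :: int. True}" "y \<in> {of_int m * p | m :: int. True}"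
    then obtain m m' :: int where "x = of_int m * p" "y = of_int m' * p" by blast
    then have "x - y = of_int (m - m') * p" by (simp add: algebra_simps)
    then show "x - y \<in> {of_int m * p | m :: int. True}" by blast
  qed
  have LG: "L' \<subseteq> G'"
  proof
    fix x assume "x \<in> L'"
    then obtain m :: int where "x = of_int m * p" unfolding L'_def by blast
    then have "x = prj d (of_int m * c)" by (simp add: p_def)
    then show "x \<in> G'" unfolding G'_def using sG c subgrp_int_mult by blast
  qed
  have e': "\<forall>x\<in>G'. x \<noteq> 0 \<longrightarrow> e \<le> norm x" using e unfolding G'_def by auto
  have red: "\<forall>z\<in>G'. \<exists>l\<in>L'. norm (z - l) \<le> \<bar>p\<bar>"
  proof
    fix z assume "z \<in> G'"
    define l where "l = of_int \<lfloor>z / p\<rfloor> * p"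
    have "l \<in> L'" unfolding l_def L'_def by blast
    have "z - l = (z / p - of_int \<lfloor>z / p\<rfloor>) * p" using c(2) by (simp add: l_def p_def field_simps)
    then have "norm (z - l) = \<bar>z / p - of_int \<lfloor>z / p\<rfloor>\<bar> * \<bar>p\<bar>" by (simp add: abs_mult)
    also have "\<dots> \<le> 1 * \<bar>p\<bar>" by (intro mult_right_mono abs_ge_zero) linarith
    finally show "\<exists>l\<in>L'. norm (z - l) \<le> \<bar>p\<bar>" using \<open>l \<in> L'\<close> by auto
  qed
  have "prj d u \<in> G'" unfolding G'_def using u by blast
  from pigeon[OF sG' sL' LG e(1) e' red this] obtain n :: nat where "n > 0" "of_nat n * prj d u \<in> L'" by blast
  then show ?thesis unfolding L'_def p_def by auto
qed

lemma lat_prj: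
  fixes G :: "complex set"
  assumes sG: "subgrp G" and c: "c \<in> G" "prj d c \<noteq> 0" and e: "e > 0" "\<forall>g\<in>G. prj d g \<noteq> 0 \<longrightarrow> e \<le> \<bar>prj d g\<bar>"
    and ab: "a \<in> G" "b \<in> G"
  shows "\<exists>n::nat. n > 0 \<and> (\<forall>x\<in>{of_int m * a + of_int n * b | m n :: int. True}.
           of_nat n * x \<in> {z. \<exists>m::int. prj d z = of_int m * prj d c})"
proof -
  obtain n1 where n1: "n1 > 0" "of_nat n1 * a \<in> {z. \<exists>m::int. prj d z = of_int m * prj d c}"
    using prj_pigeon[OF sG c e ab(1)] by blast
  obtain n2 where n2: "n2 > 0" "of_nat n2 * b \<in> {z. \<exists>m::int. prj d z = of_int m * prj d c}"
    using prj_pigeon[OF sG c e ab(2)] by blast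
  show ?thesis using lattice_mult[OF subgrp_multiples n1(2) n2(2)] n1(1) n2(1)
    by (intro exI[of _ "n1 * n2"]) auto
qed



lemma prj_nonzero_basis:
  assumes indep: "\<forall>r s :: real. r *\<^sub>R a + s *\<^sub>R b = 0 \<longrightarrow> r = 0 \<and> s = 0" and d: "norm d = 1"
  shows "prj d a \<noteq> 0 \<or> prj d b \<noteq> 0"
proof (rule ccontr)
  assume "\<not> (prj d a \<noteq> 0 \<or> prj d b \<noteq> 0)"
  then have pa: "Im (cnj d * a) = 0" and pb: "Im (cnj d * b) = 0" by (auto simp: prj_def)
  have dd: "d * cnj d = 1" using d complex_norm_square[of d] by simp
  define r1 where "r1 = Re (cnj d * a)"
  define r2 where "r2 = Re (cnj d * b)"
  have "cnj d * a = of_real r1" using pa by (simp add: complex_eq_iff r1_def)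
  then have a: "a = of_real r1 * d" using dd by (metis mult.assoc mult.commute mult_1)
  have "cnj d * b = of_real r2" using pb by (simp add: complex_eq_iff r2_def)
  then have b: "b = of_real r2 * d" using dd by (metis mult.assoc mult.commute mult_1)
  have "r2 *\<^sub>R a + (- r1) *\<^sub>R b = 0" unfolding a b by (simp add: scaleR_conv_of_real algebra_simps)
  then have "r2 = 0 \<and> r1 = 0" using indep by (metis neg_equal_0_iff_equal)
  then have "a = 0" using a by simp
  then show False using indep[rule_format, of 1 0] by simp
qed

lemma part2:
  fixes g :: nat and \<Lambda> :: "nat \<Rightarrow> complex set"
  assumes lat: "\<And>i. i \<in> {1..g} \<Longrightarrow> is_lattice (\<Lambda> i)"
    and dense: "closure (\<Sum>i\<in>{1..g}. \<Lambda> i) = UNIV"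
    and j: "j \<in> {2..g}" and nd: "\<not> discrete (\<Lambda> 1 + \<Lambda> j)"
  shows "\<exists>k\<in>{2..g}. closure (\<Lambda> 1 + \<Lambda> j + \<Lambda> k) = UNIV"
proof -
  have sL: "\<And>i. i \<in> {1..g} \<Longrightarrow> subgrp (\<Lambda> i)" using lat lattice_subgrp by blast
  have one: "1 \<in> {1..g}" and j1: "j \<in> {1..g}" using j by auto
  define H where "H = \<Lambda> 1 + \<Lambda> j"
  have sH: "subgrp H" unfolding H_def using sL one j1 subgrp_plus by blast
  have L1H: "\<Lambda> 1 \<subseteq> H" unfolding H_def using subset_plus sL j1 subgrp_0 by blast
  obtain d where d: "norm d = 1" "\<forall>t::real. of_real t * d \<in> closure H"
    using line_in_closure[OF sH] nd unfolding H_def by blast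
  have HG: "H \<subseteq> H + \<Lambda> k" and sG: "subgrp (H + \<Lambda> k)" if "k \<in> {2..g}" for k
  proof -
    have "k \<in> {1..g}" using that by auto
    then show "H \<subseteq> H + \<Lambda> k" "subgrp (H + \<Lambda> k)" using subset_plus sL subgrp_0 sH subgrp_plus by blast+
  qed
  have crit: "closure (H + \<Lambda> k) = UNIV"
    if k: "k \<in> {2..g}" and sm: "\<forall>e>0. \<exists>x\<in>H + \<Lambda> k. prj d x \<noteq> 0 \<and> \<bar>prj d x\<bar> < e" for k
  proof (rule dense_from_line[OF sG[OF k] d(1)])
    show "\<forall>t::real. of_real t * d \<in> closure (H + \<Lambda> k)"
      using d(2) closure_mono[OF HG[OF k]] by blast
    show "\<forall>r. \<forall>e>0. \<exists>g\<in>H + \<Lambda> k. \<bar>prj d g - r\<bar> < e"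
      by (rule dense_small[OF sG[OF k] sm])
  qed
  show ?thesis
  proof (cases "\<forall>e>0. \<exists>x\<in>H. prj d x \<noteq> 0 \<and> \<bar>prj d x\<bar> < e")
    case True
    then have "\<forall>e>0. \<exists>x\<in>H + \<Lambda> j. prj d x \<noteq> 0 \<and> \<bar>prj d x\<bar> < e" using HG[OF j] by blast
    then show ?thesis using crit[OF j] j unfolding H_def by blast
  next
    case False
    then obtain e0 where e0: "e0 > 0" "\<forall>x\<in>H. prj d x \<noteq> 0 \<longrightarrow> e0 \<le> \<bar>prj d x\<bar>"
      by (auto simp: not_less)
    show ?thesis
    proof (rule ccontr)
      assume no: "\<not> (\<exists>k\<in>{2..g}. closure (\<Lambda> 1 + \<Lambda> j + \<Lambda> k) = UNIV)"
      have ek: "\<exists>e>0. \<forall>x\<in>H + \<Lambda> k. prj d x \<noteq> 0 \<longrightarrow> e \<le> \<bar>prj d x\<bar>" if k: "k \<in> {2..g}" for k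
      proof (rule ccontr)
        assume "\<not> (\<exists>e>0. \<forall>x\<in>H + \<Lambda> k. prj d x \<noteq> 0 \<longrightarrow> e \<le> \<bar>prj d x\<bar>)"
        then have "\<forall>e>0. \<exists>x\<in>H + \<Lambda> k. prj d x \<noteq> 0 \<and> \<bar>prj d x\<bar> < e" by (auto simp: not_le)
        then show False using crit[OF k] no k unfolding H_def by blast
      qed
      obtain a1 b1 where indep: "\<forall>r s :: real. r *\<^sub>R a1 + s *\<^sub>R b1 = 0 \<longrightarrow> r = 0 \<and> s = 0"
        and L1: "\<Lambda> 1 = {of_int m * a1 + of_int n * b1 | m n :: int. True}"
        using lat[OF one] unfolding is_lattice_def by blast
      have a1L: "a1 \<in> \<Lambda> 1" unfolding L1 by (rule CollectI, rule exI[of _ 1], rule exI[of _ 0]) simp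
      have b1L: "b1 \<in> \<Lambda> 1" unfolding L1 by (rule CollectI, rule exI[of _ 0], rule exI[of _ 1]) simp
      obtain c where c: "c \<in> \<Lambda> 1" "prj d c \<noteq> 0"
        using prj_nonzero_basis[OF indep d(1)] a1L b1L by blast
      define M where "M = {z. \<exists>m::int. prj d z = of_int m * prj d c}"
      have "\<forall>k\<in>{1..g}. \<exists>n::nat. n > 0 \<and> (\<forall>x\<in>\<Lambda> k. of_nat n * x \<in> M)"
      proof
        fix k assume k: "k \<in> {1..g}"
        show "\<exists>n::nat. n > 0 \<and> (\<forall>x\<in>\<Lambda> k. of_nat n * x \<in> M)"
        proof (cases "k = 1")
          case True
          show ?thesis using lat_prj[OF sH _ c(2) e0, of a1 b1] c(1) L1H a1L b1L unfolding True L1 M_def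
            by blast
        next
          case False
          then have k2: "k \<in> {2..g}" using k by auto
          obtain e where e: "e > 0" "\<forall>x\<in>H + \<Lambda> k. prj d x \<noteq> 0 \<longrightarrow> e \<le> \<bar>prj d x\<bar>" using ek[OF k2] by blast
          obtain ak bk where Lk: "\<Lambda> k = {of_int m * ak + of_int n * bk | m n :: int. True}"
            using lat[OF k] unfolding is_lattice_def by blast
          have akL: "ak \<in> \<Lambda> k" unfolding Lk by (rule CollectI, rule exI[of _ 1], rule exI[of _ 0]) simp
          have bkL: "bk \<in> \<Lambda> k" unfolding Lk by (rule CollectI, rule exI[of _ 0], rule exI[of _ 1]) simp
          have LkG: "\<Lambda> k \<subseteq> H + \<Lambda> k" using subset_plus sH subgrp_0 by (metis add.commute)
          have cG: "c \<in> H + \<Lambda> k" using c(1) L1H HG[OF k2] by blast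
          show ?thesis using lat_prj[OF sG[OF k2] cG c(2) e, of ak bk] akL bkL LkG unfolding Lk M_def
            by blast
        qed
      qed
      moreover have "subgrp M" unfolding M_def by (rule subgrp_multiples)
      ultimately obtain N :: nat where N: "N > 0" "\<forall>x\<in>(\<Sum>i\<in>{1..g}. \<Lambda> i). of_nat N * x \<in> M"
        using common_mult by (metis finite_atLeastAtMost)
      define p where "p = \<bar>prj d c\<bar>"
      have p0: "p > 0" using c(2) by (simp add: p_def)
      define r where "r = p / (2 * N)"
      have r0: "r > 0" using p0 N by (simp add: r_def)
      define z where "z = \<i> * of_real r * d"
      have dd: "d * cnj d = 1" using d complex_norm_square[of d] by simp
      have pz: "prj d z = r"
      proof -
        have "cnj d * z = \<i> * of_real r * (d * cnj d)" by (simp add: z_def algebra_simps)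
        then show ?thesis using dd by (simp add: prj_def)
      qed
      have "z \<in> closure (\<Sum>i\<in>{1..g}. \<Lambda> i)" using dense by simp
      then obtain s where s: "s \<in> (\<Sum>i\<in>{1..g}. \<Lambda> i)" "dist s z < r / 2"
        unfolding closure_approachable using r0 by (meson half_gt_zero)
      have "\<bar>prj d s - r\<bar> = \<bar>prj d (s - z)\<bar>" using pz by simp
      also have "\<dots> \<le> norm (s - z)" using prj_le[of d "s - z"] d(1) by simp
      finally have sr: "\<bar>prj d s - r\<bar> < r / 2" using s(2) by (simp add: dist_norm)
      obtain m :: int where m: "prj d (of_nat N * s) = of_int m * prj d c" using N(2) s(1) unfolding M_def by blast
      then have m': "of_nat N * prj d s = of_int m * prj d c" by simp
      have pos: "prj d s > 0" using sr r0 by linarith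
      have "of_nat N * prj d s < of_nat N * (3 / 2 * r)" proof (rule mult_strict_left_mono)
        show "prj d s < 3 / 2 * r" using sr by linarith
      qed (use N in simp)
      also have "\<dots> = 3 / 4 * p" using N by (simp add: r_def)
      finally have lt: "of_nat N * prj d s < 3 / 4 * p" .
      have "\<bar>real_of_int m\<bar> * p = \<bar>of_int m * prj d c\<bar>" by (simp add: p_def abs_mult)
      also have "\<dots> = \<bar>of_nat N * prj d s\<bar>" using m' by simp
      also have "\<dots> = of_nat N * prj d s" using pos by simp
      finally have "\<bar>real_of_int m\<bar> * p = of_nat N * prj d s" .
      then have "\<bar>real_of_int m\<bar> * p < 1 * p" using lt p0 by linarith
      then have "\<bar>real_of_int m\<bar> < 1" using p0 by (simp only: mult_less_cancel_right)
      then have "m = 0" by linarith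
      then show False using m' pos N by simp
    qed
  qed
qed


theorem lemma2p2:
  fixes g :: nat and \<Lambda> :: "nat \<Rightarrow> complex set"
  assumes "g \<ge> 2"
    and "\<And>i. i \<in> {1..g} \<Longrightarrow> is_lattice (\<Lambda> i)"
    and "\<not> discrete (\<Sum>i\<in>{1..g}. \<Lambda> i)"
  shows "(\<exists>j\<in>{2..g}. \<not> discrete (\<Lambda> 1 + \<Lambda> j))
    \<and> (closure (\<Sum>i\<in>{1..g}. \<Lambda> i) = UNIV \<longrightarrow>
        (\<forall>j\<in>{2..g}. \<not> discrete (\<Lambda> 1 + \<Lambda> j) \<longrightarrow>
           (\<exists>k\<in>{2..g}. closure (\<Lambda> 1 + \<Lambda> j + \<Lambda> k) = UNIV)))"
proof (intro conjI impI ballI)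
  show "\<exists>j\<in>{2..g}. \<not> discrete (\<Lambda> 1 + \<Lambda> j)"
  proof (rule ccontr)
    assume "\<not> (\<exists>j\<in>{2..g}. \<not> discrete (\<Lambda> 1 + \<Lambda> j))"
    then have "discrete (\<Sum>i\<in>{1..g}. \<Lambda> i)" using part1[of g \<Lambda>] assms(1,2) by auto
    then show False using assms(3) by blast
  qed
next
  fix j assume "closure (\<Sum>i\<in>{1..g}. \<Lambda> i) = UNIV" "j \<in> {2..g}" "\<not> discrete (\<Lambda> 1 + \<Lambda> j)"
  then show "\<exists>k\<in>{2..g}. closure (\<Lambda> 1 + \<Lambda> j + \<Lambda> k) = UNIV"
    using part2[of g \<Lambda> j] assms(2) by blast
qed

end
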